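(* For every integer $n \geq 0$, the following polynomial identity holds in $\mathbb{C}[X]$: $$X^{\underline{n}} = B_n^* + \sum_{k=1}^{n} \frac{n}{k}\, s(n-1,k-1)\, B_k(X).$$
   Context: For $n \geq 0$, $X^{\underline{n}} := X(X-1)\cdots(X-n+1)$ ($X^{\underline{0}}=1$). The (signed) Stirling numbers of the first kind $s(n,k)$ ($0\le k\le n$) are defined by $X^{\underline{n}} = \sum_{k=0}^{n} s(n,k) X^k$ for all $n \ge 0$, with $s(n,k)=0$ when $n<k$. The Bernoulli polynomials $B_n(X)$ are defined by $\frac{t e^{Xt}}{e^t-1} = \sum_{n \ge 0} B_n(X) \frac{t^n}{n!}$. The Bernoulli numbers of the second kind $B_n^*$ are defined by $\frac{t}{\log(1+t)} = \sum_{n \ge 0} B_n^* \frac{t^n}{n!}$ (equivalently $B_n^* = \int_0^1 x^{\underline{n}}\,dx$). *)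

theory Defs
  imports Complex_Main "HOL-Computational_Algebra.Computational_Algebra"
begin

definition ffact_poly :: "nat \<Rightarrow> 'a::comm_ring_1 poly" where
  "ffact_poly n = (\<Prod>i<n. [:- of_nat i, 1:])"

text \<open>Signed Stirling numbers of the first kind, defined as the coefficients of the
falling factorial: X^(n falling) = sum_k s(n,k) X^k (so s(n,k) = 0 for n < k).\<close>
definition stirling1 :: "nat \<Rightarrow> nat \<Rightarrow> int" where
  "stirling1 n k = coeff (ffact_poly n :: int poly) k"

definition bernoulli_num :: "nat \<Rightarrow> complex" where
  "bernoulli_num n = fact n * fps_nth (fps_X / (fps_exp 1 - 1)) n"

text \<open>Bernoulli polynomials: t e^(Xt)/(e^t-1) = (t/(e^t-1)) * e^(Xt), whose coefficient of
t^n/n! is the binomial convolution below.\<close>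
definition bernpoly :: "nat \<Rightarrow> complex poly" where
  "bernpoly n = (\<Sum>k\<le>n. smult (of_nat (n choose k) * bernoulli_num k) (monom 1 (n - k)))"

definition bernoulli2 :: "nat \<Rightarrow> complex" where
  "bernoulli2 n = fact n * fps_nth (fps_X / fps_ln 1) n"

end

theory Submission imports Defs begin

lemma ffact_Suc: "ffact_poly (Suc m) = ffact_poly m * [:- of_nat m, 1:]"
  by (simp add: ffact_poly_def lessThan_Suc mult.commute)

lemma stirling1_rec: "stirling1 (Suc m) (Suc j) = stirling1 m j - of_nat m * stirling1 m (Suc j)"
  unfolding stirling1_def ffact_Suc by (simp add: mult_pCons_right)

lemma stirling1_0_Suc: "stirling1 0 (Suc j) = 0"
  by (simp add: stirling1_def ffact_poly_def)

lemma stirling1_Suc_0: "stirling1 (Suc m) 0 = 0"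
proof (induction m)
  case 0
  then show ?case unfolding stirling1_def ffact_Suc by (simp add: ffact_poly_def)
next
  case (Suc m)
  then show ?case unfolding stirling1_def ffact_Suc[of "Suc m"] by (simp add: mult_pCons_right)
qed

lemma stirling1_0_0: "stirling1 0 0 = 1"
  by (simp add: stirling1_def ffact_poly_def)

definition SE :: "nat \<Rightarrow> complex fps" where
  "SE j = Abs_fps (\<lambda>m. of_int (stirling1 m j) / fact m)"

lemma SE_rec: "(1 + fps_X) * fps_deriv (SE (Suc j)) = SE j"
proof (rule fps_ext)
  fix m
  show "((1 + fps_X) * fps_deriv (SE (Suc j))) $ m = SE j $ m"
  proof (cases m)
    case 0
    then show ?thesis by (simp add: SE_def stirling1_rec stirling1_0_Suc)
  next
    case (Suc k)
    have "((1 + fps_X) * fps_deriv (SE (Suc j))) $ m = 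
      of_nat (Suc m) * (of_int (stirling1 (Suc m) (Suc j)) / fact (Suc m)) + of_nat m * (of_int (stirling1 m (Suc j)) / fact m)"
      using Suc by (simp add: SE_def distrib_right)
    also have "\<dots> = (of_int (stirling1 (Suc m) (Suc j)) + of_nat m * of_int (stirling1 m (Suc j))) / fact m"
      by (simp add: fact_Suc add_divide_distrib del: of_nat_Suc)
    also have "\<dots> = SE j $ m" by (simp add: SE_def stirling1_rec)
    finally show ?thesis .
  qed
qed

lemma SE_0: "SE 0 = 1"
  by (rule fps_ext) (case_tac n, simp_all add: SE_def stirling1_0_0 stirling1_Suc_0)

lemma SE_eq: "SE j = fps_const (1 / fact j) * fps_ln 1 ^ j"
proof (induction j)
  case 0
  then show ?case by (simp add: SE_0)
next
  case (Suc j)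
  let ?T = "fps_const (1 / fact (Suc j)) * fps_ln (1::complex) ^ Suc j"
  have inv: "inverse (1 + fps_X :: complex fps) * (1 + fps_X) = 1"
    by (simp add: inverse_mult_eq_1)
  have c: "1/fact (Suc j) * of_nat (Suc j) = (1/fact j :: complex)"
    by (simp add: fact_Suc del: of_nat_Suc)
  have "fps_deriv ?T = fps_const (1/fact (Suc j)) * (fps_const (of_nat (Suc j)) * (fps_const 1 * inverse (1 + fps_X)) * fps_ln 1 ^ j)"
    by (simp only: fps_deriv_mult_const_left fps_deriv_power fps_ln_deriv) simp
  also have "\<dots> = fps_const (1/fact (Suc j) * of_nat (Suc j)) * inverse (1 + fps_X) * fps_ln 1 ^ j"
    by (simp add: mult.assoc flip: fps_const_mult)
  finally have "fps_deriv ?T = fps_const (1/fact j) * inverse (1 + fps_X) * fps_ln 1 ^ j"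
    using c by simp
  then have "(1 + fps_X) * fps_deriv ?T = fps_const (1 / fact j) * fps_ln 1 ^ j"
    using inv by (metis (no_types, lifting) mult.assoc mult.commute mult_1)
  then have "(1 + fps_X) * fps_deriv ?T = (1 + fps_X) * fps_deriv (SE (Suc j))"
    using SE_rec Suc by simp
  then have "inverse (1 + fps_X) * ((1 + fps_X) * fps_deriv ?T) = inverse (1 + fps_X) * ((1 + fps_X) * fps_deriv (SE (Suc j)))"
    by simp
  then have "fps_deriv ?T = fps_deriv (SE (Suc j))"
    by (simp only: mult.assoc[symmetric] inv mult_1)
  moreover have "SE (Suc j) $ 0 - ?T $ 0 = 0" by (simp add: SE_def stirling1_0_Suc)
  ultimately show ?case using fps_deriv_eq_iff[of "SE (Suc j)" ?T] by simp
qed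


abbreviation LL :: "complex fps" where "LL \<equiv> fps_ln 1"
abbreviation BB :: "complex fps" where "BB \<equiv> fps_X / (fps_exp 1 - 1)"
abbreviation QQ :: "complex fps" where "QQ \<equiv> fps_X / fps_ln 1"

lemma LL_0: "LL $ 0 = 0" by simp
lemma LL_1: "LL $ 1 = 1" by (simp add: fps_ln_nth)
lemma subdeg_LL: "subdegree LL = 1"
  by (rule subdegreeI) (use LL_1 in auto)
lemma LL_nz: "LL \<noteq> 0"
  using LL_1 by auto

lemma QQ_LL: "QQ * LL = fps_X"
proof -
  have "LL dvd fps_X" using fps_dvd_iff[of LL fps_X] subdeg_LL LL_nz by simp
  then show ?thesis by (rule dvd_div_mult_self)
qed

lemma E1_sub: "subdegree (fps_exp (1::complex) - 1) = 1"
  by (rule subdegreeI) auto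

lemma BB_E: "BB * (fps_exp 1 - 1) = fps_X"
proof -
  have nz: "fps_exp (1::complex) - 1 \<noteq> 0"
  proof
    assume "fps_exp (1::complex) - 1 = 0"
    then have "(fps_exp (1::complex) - 1) $ 1 = 0" by simp
    then show False by simp
  qed
  have "(fps_exp 1 - 1) dvd (fps_X :: complex fps)" using fps_dvd_iff[OF nz, of fps_X] E1_sub by simp
  then show ?thesis by (rule dvd_div_mult_self)
qed

lemma BB_0: "BB $ 0 = 1"
proof -
  have "(BB * (fps_exp 1 - 1)) $ 1 = 1" by (simp add: BB_E)
  then show ?thesis by (simp add: fps_mult_nth)
qed

lemma E1_LL: "(fps_exp 1 - 1) oo LL = fps_X"
  using fps_inv_right[of "fps_exp (1::complex) - 1"] fps_ln_fps_exp_inv[of "1::complex"] by simp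

lemma E1_LL': "fps_exp 1 oo LL = 1 + fps_X"
  using E1_LL by (simp add: fps_compose_sub_distrib algebra_simps)

lemma Em_LL: "fps_exp (of_nat m) oo LL = (1 + fps_X) ^ m"
proof -
  have "fps_exp (of_nat m :: complex) = fps_exp 1 ^ m" by (simp add: fps_exp_power_mult)
  then show ?thesis by (simp add: fps_compose_power[symmetric] E1_LL')
qed

lemma BB_LL: "(BB oo LL) * fps_X = LL"
proof -
  have "(BB * (fps_exp 1 - 1)) oo LL = LL" by (simp add: BB_E)
  then show ?thesis by (simp add: fps_compose_mult_distrib E1_LL)
qed

lemma key_fps:
  fixes m :: nat
  defines "F \<equiv> BB * fps_exp (of_nat m)"
  shows "(1 + fps_X) ^ m = QQ + fps_X * (fps_shift 1 F oo LL)"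
proof -
  define G where "G = fps_shift 1 F"
  have F0: "F $ 0 = 1" by (simp add: F_def BB_0)
  have FG: "F = 1 + fps_X * G"
    by (rule fps_ext) (auto simp: G_def F0)
  have FL: "F oo LL = (BB oo LL) * (1 + fps_X) ^ m"
    by (simp add: F_def fps_compose_mult_distrib Em_LL)
  have FL2: "F oo LL = 1 + LL * (G oo LL)"
    by (subst FG) (simp add: fps_compose_add_distrib fps_compose_mult_distrib)
  have "fps_X * (F oo LL) = LL * (1 + fps_X) ^ m"
    by (simp add: FL BB_LL mult.assoc[symmetric] mult.commute[of fps_X])
  then have "fps_X + fps_X * LL * (G oo LL) = LL * (1 + fps_X) ^ m"
    by (simp add: FL2 algebra_simps)
  then have "LL * (QQ + fps_X * (G oo LL)) = LL * (1 + fps_X) ^ m"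
    using QQ_LL by (simp add: algebra_simps)
  then show ?thesis using LL_nz G_def by simp
qed


lemma coeff_key:
  fixes m n :: nat
  defines "F \<equiv> BB * fps_exp (of_nat m)"
  shows "of_nat (m choose n) = QQ $ n + (if n = 0 then 0 else (\<Sum>i=0..n-1. F $ Suc i * (LL ^ i) $ (n - 1)))"
proof -
  have "((1 + fps_X) ^ m :: complex fps) $ n = of_nat (m choose n)"
    by (simp add: fps_binomial_of_nat[symmetric] binomial_gbinomial)
  moreover have "((1 + fps_X) ^ m :: complex fps) $ n = QQ $ n + (if n = 0 then 0 else (\<Sum>i=0..n-1. F $ Suc i * (LL ^ i) $ (n - 1)))"
    unfolding key_fps[of m, folded F_def] by (simp add: fps_compose_nth)
  ultimately show ?thesis by simp
qed

lemma LL_pow_nth: "(LL ^ i) $ k = fact i * of_int (stirling1 k i) / fact k"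
proof -
  have "SE i $ k = (fps_const (1 / fact i) * LL ^ i) $ k" by (simp add: SE_eq)
  then show ?thesis by (simp add: SE_def field_simps)
qed

lemma poly_bernpoly:
  fixes m :: nat
  defines "F \<equiv> BB * fps_exp (of_nat m)"
  shows "poly (bernpoly k) (of_nat m) = fact k * F $ k"
proof -
  have "poly (bernpoly k) (of_nat m) = (\<Sum>j\<le>k. of_nat (k choose j) * bernoulli_num j * of_nat m ^ (k - j))"
    by (simp add: bernpoly_def poly_sum poly_monom)
  also have "\<dots> = (\<Sum>j\<le>k. fact k * (BB $ j * (of_nat m ^ (k - j) / fact (k - j))))"
  proof (rule sum.cong[OF refl])
    fix j assume "j \<in> {..k}"
    then have jk: "j \<le> k" by simp
    show "of_nat (k choose j) * bernoulli_num j * of_nat m ^ (k - j) = fact k * (BB $ j * (of_nat m ^ (k - j) / fact (k - j)))"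
      by (simp add: bernoulli_num_def binomial_fact[OF jk] field_simps)
  qed
  also have "\<dots> = fact k * F $ k"
    by (simp add: F_def fps_mult_nth sum_distrib_left atLeast0AtMost)
  finally show ?thesis .
qed

lemma poly_ffact: "poly (ffact_poly n) (of_nat m :: complex) = fact n * of_nat (m choose n)"
  by (simp add: ffact_poly_def poly_prod binomial_gbinomial gbinomial_mult_fact atLeast0LessThan)

lemma at_nat:
  fixes m n :: nat
  shows "poly (ffact_poly n) (of_nat m :: complex) = poly ([:bernoulli2 n:] +
    (\<Sum>k=1..n. smult (of_nat n / of_nat k * of_int (stirling1 (n - 1) (k - 1))) (bernpoly k))) (of_nat m)"
proof -
  define F where "F = BB * fps_exp (of_nat m)"
  have rhs: "poly ([:bernoulli2 n:] +
    (\<Sum>k=1..n. smult (of_nat n / of_nat k * of_int (stirling1 (n - 1) (k - 1))) (bernpoly k))) (of_nat m)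
    = fact n * QQ $ n + (\<Sum>k=1..n. of_nat n / of_nat k * of_int (stirling1 (n - 1) (k - 1)) * (fact k * F $ k))"
    by (simp add: poly_sum bernoulli2_def poly_bernpoly F_def)
  show ?thesis
  proof (cases n)
    case 0
    then show ?thesis using coeff_key[of m 0] rhs by (simp add: poly_ffact bernoulli2_def ffact_poly_def)
  next
    case (Suc n')
    have "(\<Sum>k=1..n. of_nat n / of_nat k * of_int (stirling1 (n - 1) (k - 1)) * (fact k * F $ k))
      = (\<Sum>i=0..n'. of_nat n / of_nat (Suc i) * of_int (stirling1 n' i) * (fact (Suc i) * F $ Suc i))"
      using Suc by (simp only: One_nat_def sum.shift_bounds_cl_Suc_ivl) simp
    also have "\<dots> = (\<Sum>i=0..n'. fact n * (F $ Suc i * (LL ^ i) $ n'))"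
    proof (rule sum.cong[OF refl])
      fix i
      show "of_nat n / of_nat (Suc i) * of_int (stirling1 n' i) * (fact (Suc i) * F $ Suc i) =
        fact n * (F $ Suc i * (LL ^ i) $ n')"
        using Suc by (simp add: LL_pow_nth fact_Suc field_simps del: of_nat_Suc)
    qed
    finally have "(\<Sum>k=1..n. of_nat n / of_nat k * of_int (stirling1 (n - 1) (k - 1)) * (fact k * F $ k))
       = fact n * (\<Sum>i=0..n-1. F $ Suc i * (LL ^ i) $ (n - 1))"
      using Suc by (simp add: sum_distrib_left)
    then show ?thesis using rhs coeff_key[of m n] Suc
      by (simp add: poly_ffact F_def distrib_left)
  qed
qed

lemma poly_eq_nat:
  fixes p q :: "complex poly"
  assumes "\<And>m::nat. poly p (of_nat m) = poly q (of_nat m)"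
  shows "p = q"
proof (rule ccontr)
  assume "p \<noteq> q"
  then have "p - q \<noteq> 0" by simp
  then have fin: "finite {x. poly (p - q) x = 0}" by (rule poly_roots_finite)
  have "range (of_nat :: nat \<Rightarrow> complex) \<subseteq> {x. poly (p - q) x = 0}"
    using assms by auto
  moreover have "infinite (range (of_nat :: nat \<Rightarrow> complex))"
    by (intro range_inj_infinite) (simp add: inj_on_def)
  ultimately show False using fin finite_subset by blast
qed

theorem theorem3:
  fixes n :: nat
  shows "(ffact_poly n :: complex poly) =
    [:bernoulli2 n:] +
    (\<Sum>k=1..n. smult (of_nat n / of_nat k * of_int (stirling1 (n - 1) (k - 1))) (bernpoly k))"
  by (rule poly_eq_nat) (rule at_nat)

end
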